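(* Let $h\in\mathbb R[x_1,\ldots,x_n]$ be homogeneous and hyperbolic in direction $e\in\mathbb R^n$, and let $\mathcal A_e(h)$, $\sigma=(\sigma_1,\ldots,\sigma_n)$ and $\Sigma^2\mathcal A_e(h)$ be as in the context. Then: (i) If $a\in\mathbb R^n$ satisfies $h(a)\neq 0$, then $a\bullet\sigma=a_1\sigma_1+\cdots+a_n\sigma_n$ is invertible in $\mathcal A_e(h)$. (ii) If $a\in\mathring{\Lambda}_e(h)$, then $a\bullet\sigma\in\Sigma^2\mathcal A_e(h)$. (iii) $1$ is an algebraic interior point of $\Sigma^2\mathcal A_e(h)$, i.e. for every hermitian element $b=b^*\in\mathcal A_e(h)$ there is $\varepsilon>0$ with $1+tb\in\Sigma^2\mathcal A_e(h)$ for all $t\in[-\varepsilon,\varepsilon]$.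
   Context: A homogeneous polynomial $h\in\mathbb R[x]=\mathbb R[x_1,\ldots,x_n]$ is hyperbolic in direction $e\in\mathbb R^n$ if $h(e)\neq0$ and for every $a\in\mathbb R^n$ the univariate polynomial $h_{a,e}(t):=h(a-te)$ has only real roots. The hyperbolicity cone is $\Lambda_e(h)=\{a\in\mathbb R^n: h_{a,e}(t)\text{ has only nonnegative roots}\}$, with interior $\mathring\Lambda_e(h)=\{a: h_{a,e}(t)\text{ has only positive roots}\}$. For $a\in\mathbb R^n$ and a tuple $z=(z_1,\dots,z_n)$ write $a\bullet z=a_1z_1+\cdots+a_nz_n$. Let $\mathbb C\langle z\rangle=\mathbb C\langle z_1,\ldots,z_n\rangle$ be the free noncommutative unital algebra with the involution $*$ (conjugate-linear, anti-multiplicative) determined by $z_i^*=z_i$. Let $J_e(h)$ be the two-sided ideal generated by all elements $h_{a,e}(a\bullet z)$, $a\in\mathbb R^n$, together with $1-e\bullet z$. The generalized Clifford algebra is the unital $*$-algebra $\mathcal A_e(h)=\mathbb C\langle z\rangle/J_e(h)$; $\sigma_i$ denotes the class of $z_i$. $\Sigma^2\mathcal A_e(h)$ denotes the convex cone of finite sums $\sum_i a_i^*a_i$ with $a_i\in\mathcal A_e(h)$. *)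

theory Defs
  imports Main "HOL-Library.Poly_Mapping" "HOL-Library.Function_Algebras"
    "HOL-Computational_Algebra.Polynomial"
begin

type_synonym 'n mpoly = "('n \<Rightarrow>\<^sub>0 nat) \<Rightarrow>\<^sub>0 real"

definition mpoly_eval :: "('n::finite) mpoly \<Rightarrow> ('n \<Rightarrow> real) \<Rightarrow> real" where
  "mpoly_eval h x = (\<Sum>\<alpha>::('n \<Rightarrow>\<^sub>0 nat)\<in>Poly_Mapping.keys h. Poly_Mapping.lookup h \<alpha> * (\<Prod>i::'n\<in>UNIV. x i ^ Poly_Mapping.lookup \<alpha> i))"

definition homogeneous :: "('n::finite) mpoly \<Rightarrow> bool" where
  "homogeneous h \<longleftrightarrow> (\<exists>d::nat. \<forall>\<alpha>::('n \<Rightarrow>\<^sub>0 nat)\<in>Poly_Mapping.keys h. (\<Sum>i::'n\<in>UNIV. Poly_Mapping.lookup \<alpha> i) = d)"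

text \<open>The univariate polynomial h_{a,e}(t) = h(a - t e).\<close>
definition hline :: "('n::finite) mpoly \<Rightarrow> ('n \<Rightarrow> real) \<Rightarrow> ('n \<Rightarrow> real) \<Rightarrow> real poly" where
  "hline h a e = (\<Sum>\<alpha>::('n \<Rightarrow>\<^sub>0 nat)\<in>Poly_Mapping.keys h. smult (Poly_Mapping.lookup h \<alpha>) (\<Prod>i::'n\<in>UNIV. [:a i, - e i:] ^ Poly_Mapping.lookup \<alpha> i))"

definition hyperbolic :: "('n::finite) mpoly \<Rightarrow> ('n \<Rightarrow> real) \<Rightarrow> bool" where
  "hyperbolic h e \<longleftrightarrow> mpoly_eval h e \<noteq> 0 \<and>
     (\<forall>a. \<forall>z. poly (map_poly complex_of_real (hline h a e)) z = 0 \<longrightarrow> z \<in> \<real>)"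

definition hcone_interior :: "('n::finite) mpoly \<Rightarrow> ('n \<Rightarrow> real) \<Rightarrow> ('n \<Rightarrow> real) set" where
  "hcone_interior h e = {a. \<forall>z. poly (map_poly complex_of_real (hline h a e)) z = 0 \<longrightarrow>
                                 z \<in> \<real> \<and> 0 < Re z}"

text \<open>Elements are finitely supported maps from words ('n list) to complex coefficients;
  addition, subtraction, zero are pointwise (Function_Algebras).\<close>

type_synonym 'n ncpoly = "'n list \<Rightarrow> complex"

definition fsupp :: "'n ncpoly \<Rightarrow> bool" where
  "fsupp p \<longleftrightarrow> finite {w. p w \<noteq> 0}"

definition nc_one :: "'n ncpoly" where
  "nc_one w = (if w = [] then 1 else 0)"

definition nc_var :: "'n \<Rightarrow> 'n ncpoly" where
  "nc_var i w = (if w = [i] then 1 else 0)"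

definition nc_scale :: "complex \<Rightarrow> 'n ncpoly \<Rightarrow> 'n ncpoly" where
  "nc_scale c p = (\<lambda>w. c * p w)"

definition nc_mult :: "'n ncpoly \<Rightarrow> 'n ncpoly \<Rightarrow> 'n ncpoly" where
  "nc_mult p q w = (\<Sum>k\<le>length w. p (take k w) * q (drop k w))"

text \<open>The involution: conjugate-linear, anti-multiplicative, z_i^* = z_i.\<close>
definition nc_star :: "'n ncpoly \<Rightarrow> 'n ncpoly" where
  "nc_star p w = cnj (p (rev w))"

fun nc_pow :: "'n ncpoly \<Rightarrow> nat \<Rightarrow> 'n ncpoly" where
  "nc_pow X 0 = nc_one"
| "nc_pow X (Suc k) = nc_mult X (nc_pow X k)"

definition nc_polyeval :: "real poly \<Rightarrow> 'n ncpoly \<Rightarrow> 'n ncpoly" where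
  "nc_polyeval p X = (\<Sum>k\<le>degree p. nc_scale (complex_of_real (coeff p k)) (nc_pow X k))"

definition nc_lin :: "('n::finite \<Rightarrow> real) \<Rightarrow> 'n ncpoly" where
  "nc_lin a = (\<Sum>i\<in>UNIV. nc_scale (complex_of_real (a i)) (nc_var i))"

inductive_set nc_ideal :: "'n ncpoly set \<Rightarrow> 'n ncpoly set" for G where
  gen: "g \<in> G \<Longrightarrow> g \<in> nc_ideal G"
| zero: "0 \<in> nc_ideal G"
| add: "p \<in> nc_ideal G \<Longrightarrow> q \<in> nc_ideal G \<Longrightarrow> p + q \<in> nc_ideal G"
| lmult: "fsupp r \<Longrightarrow> p \<in> nc_ideal G \<Longrightarrow> nc_mult r p \<in> nc_ideal G"
| rmult: "fsupp r \<Longrightarrow> p \<in> nc_ideal G \<Longrightarrow> nc_mult p r \<in> nc_ideal G"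

definition Jideal :: "('n::finite) mpoly \<Rightarrow> ('n \<Rightarrow> real) \<Rightarrow> 'n ncpoly set" where
  "Jideal h e = nc_ideal ({nc_polyeval (hline h a e) (nc_lin a) | a. True} \<union> {nc_one - nc_lin e})"

section \<open>Notions in the quotient A_e(h) = C<z>/J, expressed on representatives\<close>

definition invertible_mod :: "'n ncpoly set \<Rightarrow> 'n ncpoly \<Rightarrow> bool" where
  "invertible_mod J x \<longleftrightarrow> (\<exists>y. fsupp y \<and> nc_mult y x - nc_one \<in> J \<and> nc_mult x y - nc_one \<in> J)"

definition sos_mod :: "'n ncpoly set \<Rightarrow> 'n ncpoly \<Rightarrow> bool" where
  "sos_mod J x \<longleftrightarrow> (\<exists>qs. (\<forall>q\<in>set qs. fsupp q) \<and>
       x - sum_list (map (\<lambda>q. nc_mult (nc_star q) q) qs) \<in> J)"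

definition hermitian_mod :: "'n ncpoly set \<Rightarrow> 'n ncpoly \<Rightarrow> bool" where
  "hermitian_mod J b \<longleftrightarrow> nc_star b - b \<in> J"

end

theory Submission
  imports Defs "HOL-Computational_Algebra.Fundamental_Theorem_Algebra"
begin


section \<open>Basic algebra of the free algebra\<close>

lemma sum_fun_apply: "(\<Sum>a\<in>A. f a) x = (\<Sum>a\<in>A. f a x)"
  by (induction A rule: infinite_finite_induct) auto

lemma sum_list_fun_apply: "(sum_list xs) x = sum_list (map (\<lambda>f. f x) xs)"
  by (induction xs) auto

lemma nc_mult_zero_left[simp]: "nc_mult 0 r = 0"
  by (rule ext) (simp add: nc_mult_def)

lemma nc_mult_zero_right[simp]: "nc_mult r 0 = 0"
  by (rule ext) (simp add: nc_mult_def)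

lemma nc_mult_zero_left'[simp]: "nc_mult (\<lambda>a. 0) r = (\<lambda>a. 0)"
  by (rule ext) (simp add: nc_mult_def)

lemma nc_mult_zero_right'[simp]: "nc_mult r (\<lambda>a. 0) = (\<lambda>a. 0)"
  by (rule ext) (simp add: nc_mult_def)

lemma nc_mult_add_left: "nc_mult (p + q) r = nc_mult p r + nc_mult q r"
  by (rule ext) (simp add: nc_mult_def algebra_simps sum.distrib)

lemma nc_mult_add_right: "nc_mult r (p + q) = nc_mult r p + nc_mult r q"
  by (rule ext) (simp add: nc_mult_def algebra_simps sum.distrib)

lemma nc_mult_diff_left: "nc_mult (p - q) r = nc_mult p r - nc_mult q r"
  by (rule ext) (simp add: nc_mult_def algebra_simps sum_subtractf)

lemma nc_mult_diff_right: "nc_mult r (p - q) = nc_mult r p - nc_mult r q"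
  by (rule ext) (simp add: nc_mult_def algebra_simps sum_subtractf)

lemma nc_mult_scale_left: "nc_mult (nc_scale c p) r = nc_scale c (nc_mult p r)"
  by (rule ext) (simp add: nc_mult_def nc_scale_def sum_distrib_left algebra_simps)

lemma nc_mult_scale_right: "nc_mult r (nc_scale c p) = nc_scale c (nc_mult r p)"
  by (rule ext) (simp add: nc_mult_def nc_scale_def sum_distrib_left algebra_simps)

lemma nc_mult_sum_left: "nc_mult (\<Sum>a\<in>A. f a) r = (\<Sum>a\<in>A. nc_mult (f a) r)"
  by (rule ext) (simp add: nc_mult_def sum_fun_apply sum_distrib_right sum.swap[of _ A])

lemma nc_mult_sum_right: "nc_mult r (\<Sum>a\<in>A. f a) = (\<Sum>a\<in>A. nc_mult r (f a))"
  by (rule ext) (simp add: nc_mult_def sum_fun_apply sum_distrib_left sum.swap[of _ A])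

lemma nc_mult_sum_list_left: "nc_mult (sum_list xs) r = sum_list (map (\<lambda>a. nc_mult a r) xs)"
proof (induction xs)
  case (Cons a xs) then show ?case by (simp only: list.map sum_list.Cons nc_mult_add_left)
qed simp

lemma nc_mult_sum_list_right: "nc_mult r (sum_list xs) = sum_list (map (\<lambda>a. nc_mult r a) xs)"
proof (induction xs)
  case (Cons a xs) then show ?case by (simp only: list.map sum_list.Cons nc_mult_add_right)
qed simp

lemma nc_scale_add: "nc_scale c (p + q) = nc_scale c p + nc_scale c q"
  by (rule ext) (simp add: nc_scale_def algebra_simps)

lemma nc_scale_diff: "nc_scale c (p - q) = nc_scale c p - nc_scale c q"
  by (rule ext) (simp add: nc_scale_def algebra_simps)

lemma nc_scale_add_left: "nc_scale (c + d) p = nc_scale c p + nc_scale d p"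
  by (rule ext) (simp add: nc_scale_def algebra_simps)

lemma nc_scale_scale: "nc_scale c (nc_scale d p) = nc_scale (c * d) p"
  by (rule ext) (simp add: nc_scale_def algebra_simps)

lemma nc_scale_one[simp]: "nc_scale 1 p = p"
  by (rule ext) (simp add: nc_scale_def)

lemma nc_scale_zero[simp]: "nc_scale 0 p = 0" "nc_scale c 0 = 0"
  by (auto simp add: nc_scale_def)

lemma nc_scale_sum: "nc_scale c (\<Sum>a\<in>A. f a) = (\<Sum>a\<in>A. nc_scale c (f a))"
  by (rule ext) (simp add: nc_scale_def sum_fun_apply sum_distrib_left)

lemma nc_scale_minus1: "nc_scale (-1) p = - p"
  by (rule ext) (simp add: nc_scale_def)

lemma nc_mult_one_left[simp]: "nc_mult nc_one p = p"
proof (rule ext)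
  fix w :: "'a list"
  have "nc_mult nc_one p w = (\<Sum>k\<in>{0}. nc_one (take k w) * p (drop k w))"
    unfolding nc_mult_def
    by (rule sum.mono_neutral_right) (auto simp: nc_one_def)
  then show "nc_mult nc_one p w = p w" by (simp add: nc_one_def)
qed

lemma nc_mult_one_right[simp]: "nc_mult p nc_one = p"
proof (rule ext)
  fix w :: "'a list"
  have "nc_mult p nc_one w = (\<Sum>k\<in>{length w}. p (take k w) * nc_one (drop k w))"
    unfolding nc_mult_def
    by (rule sum.mono_neutral_right) (auto simp: nc_one_def)
  then show "nc_mult p nc_one w = p w" by (simp add: nc_one_def)
qed

lemma nc_mult_assoc: "nc_mult (nc_mult p q) r = nc_mult p (nc_mult q r)"
proof (rule ext)
  fix w :: "'a list"
  define n where "n = length w"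
  define g where "g i l = p (take i w) * q (take l (drop i w)) * r (drop (i+l) w)" for i l
  have "nc_mult (nc_mult p q) r w = (\<Sum>k\<le>n. \<Sum>i\<le>k. g i (k - i))"
    unfolding nc_mult_def n_def g_def sum_distrib_right
    by (intro sum.cong refl) (auto simp add: min_def take_drop)
  also have "\<dots> = (\<Sum>(i,l)\<in>{(i,l). i+l \<le> n}. g i l)"
    by (rule sum.triangle_reindex_eq[symmetric])
  also have "\<dots> = (\<Sum>(i,l)\<in>(SIGMA i:{..n}. {..n-i}). g i l)"
    by (intro sum.cong refl) auto
  also have "\<dots> = (\<Sum>i\<le>n. \<Sum>l\<le>n-i. g i l)"
    by (rule sum.Sigma[symmetric]) auto
  also have "\<dots> = nc_mult p (nc_mult q r) w"
    unfolding nc_mult_def n_def g_def sum_distrib_left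
    apply (intro sum.cong refl)
    apply (simp add: mult.assoc)
    apply (simp add: drop_drop add.commute)
    done
  finally show "nc_mult (nc_mult p q) r w = nc_mult p (nc_mult q r) w" .
qed


lemma nc_star_mult: "nc_star (nc_mult p q) = nc_mult (nc_star q) (nc_star p)"
proof (rule ext)
  fix w :: "'a list"
  define n where "n = length w"
  have "nc_star (nc_mult p q) w = (\<Sum>k\<le>n. cnj (p (take k (rev w))) * cnj (q (drop k (rev w))))"
    by (simp add: nc_star_def nc_mult_def n_def)
  also have "\<dots> = (\<Sum>k\<le>n. cnj (p (take (n - k) (rev w))) * cnj (q (drop (n - k) (rev w))))"
    by (rule sum.reindex_bij_witness[where i="\<lambda>k. n - k" and j="\<lambda>k. n - k"]) auto
  also have "\<dots> = nc_mult (nc_star q) (nc_star p) w"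
    by (simp add: nc_star_def nc_mult_def n_def rev_take rev_drop mult.commute)
  finally show "nc_star (nc_mult p q) w = nc_mult (nc_star q) (nc_star p) w" .
qed

lemma nc_star_add: "nc_star (p + q) = nc_star p + nc_star q"
  by (rule ext) (simp add: nc_star_def)

lemma nc_star_diff: "nc_star (p - q) = nc_star p - nc_star q"
  by (rule ext) (simp add: nc_star_def)

lemma nc_star_zero[simp]: "nc_star 0 = 0"
  by (rule ext) (simp add: nc_star_def)

lemma nc_star_scale: "nc_star (nc_scale c p) = nc_scale (cnj c) (nc_star p)"
  by (rule ext) (simp add: nc_star_def nc_scale_def)

lemma nc_star_star[simp]: "nc_star (nc_star p) = p"
  by (rule ext) (simp add: nc_star_def)

lemma nc_star_one[simp]: "nc_star nc_one = nc_one"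
  by (rule ext) (simp add: nc_star_def nc_one_def)

lemma nc_star_var[simp]: "nc_star (nc_var i) = nc_var i"
  by (rule ext) (auto simp add: nc_star_def nc_var_def)

lemma nc_star_sum: "nc_star (\<Sum>a\<in>A. f a) = (\<Sum>a\<in>A. nc_star (f a))"
  by (rule ext) (simp add: nc_star_def sum_fun_apply)

lemma fsupp_zero[simp]: "fsupp 0" "fsupp (\<lambda>w. 0)"
  by (auto simp: fsupp_def)

lemma fsupp_one[simp]: "fsupp nc_one"
  unfolding fsupp_def by (rule finite_subset[of _ "{[]}"]) (auto simp: nc_one_def)

lemma fsupp_var[simp]: "fsupp (nc_var i)"
  unfolding fsupp_def by (rule finite_subset[of _ "{[i]}"]) (auto simp: nc_var_def)

lemma fsupp_add[simp]: "fsupp p \<Longrightarrow> fsupp q \<Longrightarrow> fsupp (p + q)"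
  unfolding fsupp_def
  by (rule finite_subset[of _ "{w. p w \<noteq> 0} \<union> {w. q w \<noteq> 0}"]) auto

lemma fsupp_scale[simp]: "fsupp p \<Longrightarrow> fsupp (nc_scale c p)"
  unfolding fsupp_def nc_scale_def
  by (rule finite_subset[of _ "{w. p w \<noteq> 0}"]) auto

lemma fsupp_uminus[simp]: "fsupp p \<Longrightarrow> fsupp (- p)"
  unfolding fsupp_def
  by (rule finite_subset[of _ "{w. p w \<noteq> 0}"]) auto

lemma fsupp_diff[simp]: "fsupp p \<Longrightarrow> fsupp q \<Longrightarrow> fsupp (p - q)"
  unfolding fsupp_def
  by (rule finite_subset[of _ "{w. p w \<noteq> 0} \<union> {w. q w \<noteq> 0}"]) auto

lemma fsupp_star[simp]: "fsupp p \<Longrightarrow> fsupp (nc_star p)"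
  unfolding fsupp_def nc_star_def
  by (rule finite_subset[of _ "rev ` {w. p w \<noteq> 0}"]) (auto intro: image_eqI[of _ rev, OF rev_rev_ident[symmetric]])

lemma fsupp_mult[simp]:
  assumes "fsupp p" "fsupp q" shows "fsupp (nc_mult p q)"
proof -
  have "{w. nc_mult p q w \<noteq> 0} \<subseteq> (\<lambda>(u,v). u @ v) ` ({w. p w \<noteq> 0} \<times> {w. q w \<noteq> 0})"
  proof
    fix w assume "w \<in> {w. nc_mult p q w \<noteq> 0}"
    then have "(\<Sum>k\<le>length w. p (take k w) * q (drop k w)) \<noteq> 0" by (simp add: nc_mult_def)
    then obtain k where "p (take k w) * q (drop k w) \<noteq> 0" by (meson sum.neutral)
    then show "w \<in> (\<lambda>(u,v). u @ v) ` ({w. p w \<noteq> 0} \<times> {w. q w \<noteq> 0})"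
      by (intro image_eqI[of _ _ "(take k w, drop k w)"]) auto
  qed
  moreover have "finite ((\<lambda>(u,v). u @ v) ` ({w. p w \<noteq> 0} \<times> {w. q w \<noteq> 0}))"
    using assms by (simp add: fsupp_def)
  ultimately show ?thesis unfolding fsupp_def by (rule finite_subset)
qed

lemma fsupp_sum[simp]: "(\<And>a. a \<in> A \<Longrightarrow> fsupp (f a)) \<Longrightarrow> fsupp (\<Sum>a\<in>A. f a)"
proof (induction A rule: infinite_finite_induct)
  case (insert x F)
  then show ?case by (simp only: sum.insert[OF insert(1,2)]) (intro fsupp_add; simp)
qed simp_all

lemma fsupp_sum_list: "(\<And>a. a \<in> set xs \<Longrightarrow> fsupp a) \<Longrightarrow> fsupp (sum_list xs)"
proof (induction xs)
  case (Cons a xs)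
  then show ?case by (simp only: sum_list.Cons) (intro fsupp_add; simp)
qed simp

lemma fsupp_lin[simp]: "fsupp (nc_lin a)"
  unfolding nc_lin_def by simp

lemma fsupp_pow[simp]: "fsupp X \<Longrightarrow> fsupp (nc_pow X k)"
  by (induction k) simp_all

lemma ideal_scale: "fsupp r \<Longrightarrow> p \<in> nc_ideal G \<Longrightarrow> nc_scale c p \<in> nc_ideal G"
proof -
  assume "p \<in> nc_ideal G"
  then have "nc_mult (nc_scale c nc_one) p \<in> nc_ideal G" by (intro nc_ideal.lmult) simp_all
  then show ?thesis by (simp add: nc_mult_scale_left)
qed

lemma ideal_scale': "p \<in> nc_ideal G \<Longrightarrow> nc_scale c p \<in> nc_ideal G"
  using ideal_scale[of nc_one] by simp

lemma ideal_uminus: "p \<in> nc_ideal G \<Longrightarrow> - p \<in> nc_ideal G"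
  using ideal_scale'[of p G "-1"] by (simp add: nc_scale_minus1)

lemma ideal_diff: "p \<in> nc_ideal G \<Longrightarrow> q \<in> nc_ideal G \<Longrightarrow> p - q \<in> nc_ideal G"
  using nc_ideal.add[OF _ ideal_uminus[of q]] by (simp add: diff_conv_add_uminus del: add_uminus_conv_diff)

lemma ideal_sum: "(\<And>a. a \<in> A \<Longrightarrow> f a \<in> nc_ideal G) \<Longrightarrow> (\<Sum>a\<in>A. f a) \<in> nc_ideal G"
proof (induction A rule: infinite_finite_induct)
  case (insert x F)
  then show ?case by (simp only: sum.insert[OF insert(1,2)]) (intro nc_ideal.add; simp)
qed (simp_all add: nc_ideal.zero)

lemma ideal_sum_list: "(\<And>a. a \<in> set xs \<Longrightarrow> a \<in> nc_ideal G) \<Longrightarrow> sum_list xs \<in> nc_ideal G"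
proof (induction xs)
  case (Cons a xs)
  then show ?case by (simp only: sum_list.Cons) (intro nc_ideal.add; simp)
qed (simp add: nc_ideal.zero)


section \<open>Powers and polynomial evaluation\<close>

lemma nc_pow_add: "nc_pow X (m + n) = nc_mult (nc_pow X m) (nc_pow X n)"
  by (induction m) (simp_all add: nc_mult_assoc)

lemma nc_pow_Suc': "nc_pow X (Suc k) = nc_mult (nc_pow X k) X"
  using nc_pow_add[of X k 1] by simp

lemma polyeval_bound:
  assumes "degree p \<le> N"
  shows "nc_polyeval p X = (\<Sum>k\<le>N. nc_scale (complex_of_real (coeff p k)) (nc_pow X k))"
  unfolding nc_polyeval_def
  by (rule sum.mono_neutral_left) (use assms in \<open>auto simp: coeff_eq_0\<close>)

lemma polyeval_0[simp]: "nc_polyeval 0 X = 0"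
  by (simp add: nc_polyeval_def)

lemma polyeval_pCons:
  "nc_polyeval (pCons a p) X = nc_scale (complex_of_real a) nc_one + nc_mult X (nc_polyeval p X)"
proof -
  have "nc_polyeval (pCons a p) X =
     (\<Sum>k\<le>Suc (degree p). nc_scale (complex_of_real (coeff (pCons a p) k)) (nc_pow X k))"
    by (rule polyeval_bound) (simp add: degree_pCons_le)
  also have "\<dots> = nc_scale (complex_of_real a) nc_one +
      (\<Sum>k\<le>degree p. nc_scale (complex_of_real (coeff p k)) (nc_pow X (Suc k)))"
    by (subst sum.atMost_Suc_shift) (simp add: add.commute)
  also have "(\<Sum>k\<le>degree p. nc_scale (complex_of_real (coeff p k)) (nc_pow X (Suc k)))
      = nc_mult X (nc_polyeval p X)"
    by (simp add: nc_polyeval_def nc_mult_sum_right nc_mult_scale_right)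
  finally show ?thesis .
qed

lemma polyeval_const: "nc_polyeval [:a:] X = nc_scale (complex_of_real a) nc_one"
  using polyeval_pCons[of a 0 X] by simp

lemma polyeval_add: "nc_polyeval (p + q) X = nc_polyeval p X + nc_polyeval q X"
proof (induction p arbitrary: q)
  case 0
  show ?case by (simp only: add_0 polyeval_0)
next
  case (pCons a p)
  obtain b q' where q: "q = pCons b q'" by (cases q)
  have "nc_polyeval (pCons a p + q) X = nc_polyeval (pCons (a + b) (p + q')) X"
    by (simp only: q add_pCons)
  also have "\<dots> = nc_scale (complex_of_real a) nc_one + nc_scale (complex_of_real b) nc_one
      + (nc_mult X (nc_polyeval p X) + nc_mult X (nc_polyeval q' X))"
    by (simp only: polyeval_pCons pCons.IH nc_mult_add_right of_real_add nc_scale_add_left)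
  also have "\<dots> = nc_polyeval (pCons a p) X + nc_polyeval q X"
    by (simp only: q polyeval_pCons ac_simps)
  finally show ?case .
qed

lemma polyeval_smult: "nc_polyeval (smult c p) X = nc_scale (complex_of_real c) (nc_polyeval p X)"
proof (induction p)
  case 0
  show ?case by (simp only: smult_0_right polyeval_0 nc_scale_zero)
next
  case (pCons a p)
  show ?case
    by (simp only: smult_pCons polyeval_pCons pCons.IH nc_mult_scale_right nc_scale_add
      nc_scale_scale of_real_mult)
qed

lemma polyeval_uminus: "nc_polyeval (- p) X = - nc_polyeval p X"
  using polyeval_smult[of "-1" p X] by (simp add: nc_scale_minus1)

lemma polyeval_diff: "nc_polyeval (p - q) X = nc_polyeval p X - nc_polyeval q X"
  using polyeval_add[of p "-q" X] by (simp add: polyeval_uminus)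

lemma fsupp_polyeval[simp]: "fsupp X \<Longrightarrow> fsupp (nc_polyeval p X)"
  unfolding nc_polyeval_def by simp

lemma polyeval_commute: "nc_mult X (nc_polyeval p X) = nc_mult (nc_polyeval p X) X"
proof (induction p)
  case 0
  show ?case by (simp only: polyeval_0 nc_mult_zero_left nc_mult_zero_right)
next
  case (pCons a p)
  have "nc_mult X (nc_polyeval (pCons a p) X) =
     nc_scale (complex_of_real a) X + nc_mult X (nc_mult X (nc_polyeval p X))"
    by (simp only: polyeval_pCons nc_mult_add_right nc_mult_scale_right nc_mult_one_right)
  also have "\<dots> = nc_scale (complex_of_real a) X + nc_mult (nc_mult X (nc_polyeval p X)) X"
    by (simp only: nc_mult_assoc[symmetric] pCons.IH)
  also have "\<dots> = nc_mult (nc_polyeval (pCons a p) X) X"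
    by (simp only: polyeval_pCons nc_mult_add_left nc_mult_scale_left nc_mult_one_left)
  finally show ?case .
qed

lemma polyeval_mult: "nc_polyeval (p * q) X = nc_mult (nc_polyeval p X) (nc_polyeval q X)"
proof (induction p)
  case 0
  show ?case by (simp only: mult_zero_left polyeval_0 nc_mult_zero_left)
next
  case (pCons a p)
  have "pCons a p * q = smult a q + pCons 0 (p * q)" by simp
  then have "nc_polyeval (pCons a p * q) X = nc_scale (complex_of_real a) (nc_polyeval q X)
      + (nc_scale 0 nc_one + nc_mult X (nc_mult (nc_polyeval p X) (nc_polyeval q X)))"
    by (simp only: polyeval_add polyeval_smult polyeval_pCons pCons.IH of_real_0)
  also have "\<dots> = nc_mult (nc_polyeval (pCons a p) X) (nc_polyeval q X)"
    by (simp only: polyeval_pCons nc_mult_add_left nc_mult_scale_left nc_mult_one_left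
      nc_mult_assoc nc_scale_zero add_0)
  finally show ?case .
qed

lemma polyeval_X: "nc_polyeval [:0, 1:] X = X"
  by (simp only: polyeval_pCons polyeval_0 nc_mult_zero_right of_real_0 of_real_1
     nc_scale_zero nc_scale_one nc_mult_one_right add_0 add_0_right)

lemma polyeval_star:
  assumes "nc_star X = X"
  shows "nc_star (nc_polyeval p X) = nc_polyeval p X"
proof (induction p)
  case 0
  show ?case by (simp only: polyeval_0 nc_star_zero)
next
  case (pCons a p)
  show ?case
    by (simp only: polyeval_pCons nc_star_add nc_star_scale nc_star_mult pCons.IH assms
        polyeval_commute nc_star_one complex_cnj_complex_of_real)
qed




lemma map_of_real_mult:
  "map_poly complex_of_real (p * q) = map_poly complex_of_real p * map_poly complex_of_real q"
  by (rule poly_eqI) (simp add: coeff_map_poly coeff_mult)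

lemma poly_map_of_real: "poly (map_poly complex_of_real p) (complex_of_real x) = complex_of_real (poly p x)"
  by (induction p) (auto simp: map_poly_pCons)

lemma sqrt_mod:
  fixes q :: "real poly"
  assumes "q \<noteq> 0" "\<forall>z. poly (map_poly complex_of_real q) z = 0 \<longrightarrow> z \<in> \<real> \<and> 0 < Re z"
  shows "\<exists>s r. [:0,1:] - s*s = q*r"
  using assms
proof (induction "degree q" arbitrary: q rule: less_induct)
  case less
  show ?case
  proof (cases "degree q = 0")
    case True
    then obtain c where qc: "q = [:c:]" by (meson degree_eq_zeroE)
    with less.prems have "c \<noteq> 0" by simp
    then have "[:0,1:] - 0*0 = q * smult (1/c) [:0,1:]" by (simp add: qc)
    then show ?thesis by blast
  next
    case False
    let ?cq = "map_poly complex_of_real q"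
    have "degree ?cq = degree q" by (rule degree_map_poly) simp
    then have "\<not> (\<exists>a l. a \<noteq> 0 \<and> l = 0 \<and> ?cq = pCons a l)" using False by auto
    then obtain z where z: "poly ?cq z = 0" using fundamental_theorem_of_algebra_alt by blast
    with less.prems have "z \<in> \<real>" "0 < Re z" by auto
    define l where "l = Re z"
    have zl: "z = complex_of_real l" using \<open>z \<in> \<real>\<close> by (simp add: l_def complex_is_Real_iff complex_eq_iff)
    have lpos: "l > 0" using \<open>0 < Re z\<close> l_def by simp
    have "poly q l = 0" using z zl poly_map_of_real[of q l] by simp
    then obtain q' where q': "q = [:-l,1:] * q'" using poly_eq_0_iff_dvd by (metis dvdE)
    have q'nz: "q' \<noteq> 0" using q' less.prems(1) by auto
    have "degree q = degree [:-l,1:] + degree q'" unfolding q' by (rule degree_mult_eq) (use q'nz in auto)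
    then have degq': "degree q' < degree q" by simp
    have roots': "\<forall>z. poly (map_poly complex_of_real q') z = 0 \<longrightarrow> z \<in> \<real> \<and> 0 < Re z"
    proof (intro allI impI)
      fix w assume "poly (map_poly complex_of_real q') w = 0"
      then have "poly ?cq w = 0" unfolding q' map_of_real_mult poly_mult by simp
      then show "w \<in> \<real> \<and> 0 < Re w" using less.prems(2) by blast
    qed
    obtain s' r' where sr: "[:0,1:] - s'*s' = q'*r'"
      using less.hyps[OF degq' q'nz roots'] by blast
    have ev: "l - poly s' l * poly s' l = poly q' l * poly r' l"
      using arg_cong[OF sr, of "\<lambda>p. poly p l"] by simp
    obtain v where v: "poly q' l * v * v + 2 * poly s' l * v = poly r' l"
    proof (cases "poly q' l = 0")
      case True
      then have "poly s' l * poly s' l = l" using ev by simp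
      then have "poly s' l \<noteq> 0" using lpos by auto
      then show ?thesis using True by (intro that[of "poly r' l / (2 * poly s' l)"]) (simp add: field_simps)
    next
      case False
      define a where "a = poly q' l"
      define t where "t = sqrt l"
      define b where "b = poly s' l"
      define c where "c = poly r' l"
      have tt: "t * t = l" using lpos by (simp add: t_def)
      have ev': "l - b * b = a * c" using ev by (simp add: a_def b_def c_def)
      have an: "a \<noteq> 0" using False by (simp add: a_def)
      have "a * ((t - b) / a) * ((t - b) / a) + 2 * b * ((t - b) / a)
          = ((t - b) * (t - b) + 2 * b * (t - b)) / a"
        using an by (simp add: field_simps)
      also have "(t - b) * (t - b) + 2 * b * (t - b) = t * t - b * b" by (simp add: algebra_simps)
      also have "\<dots> = a * c" using tt ev' by simp
      also have "a * c / a = c" using an by simp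
      finally show ?thesis by (intro that[of "(t - b) / a"]) (simp add: a_def b_def c_def)
    qed
    define g where "g = r' - smult v (s' + s') - smult (v * v) q'"
    have "poly g l = 0" using v by (simp add: g_def algebra_simps)
    then obtain g' where g': "g = [:-l,1:] * g'" using poly_eq_0_iff_dvd by (metis dvdE)
    define s where "s = s' + smult v q'"
    have "[:0,1:] - s*s = q' * g"
      using sr by (simp add: s_def g_def algebra_simps)
    also have "\<dots> = q * g'" by (simp add: g' q' algebra_simps)
    finally show ?thesis by blast
  qed
qed




lemma poly_hline: "poly (hline h a e) t = mpoly_eval h (\<lambda>i. a i - t * e i)"
  by (simp add: hline_def mpoly_eval_def poly_sum poly_prod)

lemma homogeneous_scale:
  assumes "homogeneous h"
  obtains d where "\<And>c x. mpoly_eval h (\<lambda>i. c * x i) = c ^ d * mpoly_eval h x"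
proof -
  obtain d where d: "\<And>\<alpha>. \<alpha> \<in> Poly_Mapping.keys h \<Longrightarrow> (\<Sum>i\<in>UNIV. Poly_Mapping.lookup \<alpha> i) = d"
    using assms unfolding homogeneous_def by blast
  have "mpoly_eval h (\<lambda>i. c * x i) = c ^ d * mpoly_eval h x" for c x
  proof -
    have "mpoly_eval h (\<lambda>i. c * x i) = (\<Sum>\<alpha>\<in>Poly_Mapping.keys h. Poly_Mapping.lookup h \<alpha> *
        (c ^ (\<Sum>i\<in>UNIV. Poly_Mapping.lookup \<alpha> i) * (\<Prod>i\<in>UNIV. x i ^ Poly_Mapping.lookup \<alpha> i)))"
      unfolding mpoly_eval_def
      by (intro sum.cong refl) (simp add: power_mult_distrib prod.distrib power_sum)
    also have "\<dots> = (\<Sum>\<alpha>\<in>Poly_Mapping.keys h. c ^ d * (Poly_Mapping.lookup h \<alpha> *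
        (\<Prod>i\<in>UNIV. x i ^ Poly_Mapping.lookup \<alpha> i)))"
      by (intro sum.cong refl) (simp add: d)
    also have "\<dots> = c ^ d * mpoly_eval h x"
      by (simp add: mpoly_eval_def sum_distrib_left)
    finally show ?thesis .
  qed
  then show ?thesis using that by blast
qed


lemma hyperbolic_root_real:
  assumes "hyperbolic h e" "poly (map_poly complex_of_real (hline h a e)) z = 0"
  shows "\<exists>t. z = complex_of_real t \<and> poly (hline h a e) t = 0"
proof -
  have "z \<in> \<real>" using assms unfolding hyperbolic_def by blast
  then obtain t where zt: "z = complex_of_real t" by (auto elim: Reals_cases)
  have "poly (map_poly complex_of_real (hline h a e)) (complex_of_real t) = complex_of_real (poly (hline h a e) t)"
    by (rule poly_map_of_real)
  then show ?thesis using assms(2) zt by auto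
qed

lemma cone_nbhd:
  assumes "homogeneous h" "hyperbolic h e"
  shows "\<exists>\<epsilon>>0. \<forall>s. \<bar>s\<bar> \<le> \<epsilon> \<longrightarrow> (\<lambda>i. e i + s * \<delta> i) \<in> hcone_interior h e"
proof -
  obtain d where hom: "\<And>c x. mpoly_eval h (\<lambda>i. c * x i) = c ^ d * mpoly_eval h x"
    using homogeneous_scale[OF assms(1)] by blast
  define g where "g = hline h e (\<lambda>i. - \<delta> i)"
  have g: "poly g r = mpoly_eval h (\<lambda>i. e i + r * \<delta> i)" for r
    by (simp add: g_def poly_hline)
  have he: "mpoly_eval h e \<noteq> 0" using assms(2) by (simp add: hyperbolic_def)
  have g0: "poly g 0 = mpoly_eval h e" by (simp add: g)
  have "isCont (\<lambda>r. poly g r) 0" by simp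
  then have "(\<lambda>r. poly g r) \<midarrow>0\<rightarrow> poly g 0" by (simp add: isCont_def)
  from LIM_D[OF this, of "\<bar>mpoly_eval h e\<bar>"]
  obtain \<epsilon>' where ep: "\<epsilon>' > 0" and ep': "\<And>r. r \<noteq> 0 \<Longrightarrow> norm (r - 0) < \<epsilon>' \<Longrightarrow> norm (poly g r - poly g 0) < \<bar>mpoly_eval h e\<bar>"
    using he by force
  have gnz: "poly g r \<noteq> 0" if "\<bar>r\<bar> < \<epsilon>'" for r
  proof (cases "r = 0")
    case True then show ?thesis using g0 he by simp
  next
    case False
    then have "\<bar>poly g r - mpoly_eval h e\<bar> < \<bar>mpoly_eval h e\<bar>" using ep'[of r] that g0 by simp
    then show ?thesis by auto
  qed
  define \<epsilon> where "\<epsilon> = \<epsilon>' / 2"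
  have "\<epsilon> > 0" using ep by (simp add: \<epsilon>_def)
  moreover have "(\<lambda>i. e i + s * \<delta> i) \<in> hcone_interior h e" if s: "\<bar>s\<bar> \<le> \<epsilon>" for s
    unfolding hcone_interior_def
  proof (intro CollectI allI impI)
    fix z assume "poly (map_poly complex_of_real (hline h (\<lambda>i. e i + s * \<delta> i) e)) z = 0"
    then obtain t where zt: "z = complex_of_real t" and t0: "poly (hline h (\<lambda>i. e i + s * \<delta> i) e) t = 0"
      using hyperbolic_root_real[OF assms(2)] by blast
    have "t > 0"
    proof (rule ccontr)
      assume "\<not> t > 0"
      define c where "c = 1 - t"
      have c1: "c \<ge> 1" using \<open>\<not> t > 0\<close> by (simp add: c_def)
      have "(\<lambda>i. e i + s * \<delta> i - t * e i) = (\<lambda>i. c * (e i + (s / c) * \<delta> i))"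
        using c1 by (auto simp: c_def field_simps)
      then have "0 = c ^ d * poly g (s / c)"
        using t0 by (simp add: poly_hline hom g)
      then have "poly g (s / c) = 0" using c1 by simp
      moreover have "\<bar>s / c\<bar> < \<epsilon>'"
      proof -
        have "\<bar>s / c\<bar> = \<bar>s\<bar> / c" using c1 by simp
        also have "\<dots> \<le> \<bar>s\<bar>" using c1 by (simp add: divide_le_eq mult_le_cancel_left1)
        also have "\<dots> < \<epsilon>'" using s ep by (simp add: \<epsilon>_def)
        finally show ?thesis .
      qed
      ultimately show False using gnz by blast
    qed
    then show "z \<in> \<real> \<and> 0 < Re z" using zt by simp
  qed
  ultimately show ?thesis by blast
qed




section \<open>Sums of squares modulo an ideal\<close>

lemma nc_scale_sum_list: "nc_scale c (sum_list xs) = sum_list (map (nc_scale c) xs)"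
proof (induction xs)
  case (Cons a xs) then show ?case by (simp only: list.map sum_list.Cons nc_scale_add)
qed (simp only: list.map sum_list.Nil nc_scale_zero)

lemma diff_telescope: "(a::'a::ab_group_add) - c = (a - b) + (b - c)"
  by simp

lemma sum_list_map_append: "sum_list (map f (xs @ ys)) = sum_list (map f xs) + sum_list (map f ys)"
  by simp

lemma sos_cong: "sos_mod (nc_ideal G) x \<Longrightarrow> x' - x \<in> nc_ideal G \<Longrightarrow> sos_mod (nc_ideal G) x'"
  unfolding sos_mod_def
proof (elim exE conjE)
  fix qs assume qs: "\<forall>q\<in>set qs. fsupp q" and x: "x - sum_list (map (\<lambda>q. nc_mult (nc_star q) q) qs) \<in> nc_ideal G"
    and d: "x' - x \<in> nc_ideal G"
  have "x' - sum_list (map (\<lambda>q. nc_mult (nc_star q) q) qs) =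
      (x' - x) + (x - sum_list (map (\<lambda>q. nc_mult (nc_star q) q) qs))" by (rule diff_telescope)
  also have "\<dots> \<in> nc_ideal G" by (rule nc_ideal.add[OF d x])
  finally show "\<exists>qs. (\<forall>q\<in>set qs. fsupp q) \<and> x' - sum_list (map (\<lambda>q. nc_mult (nc_star q) q) qs) \<in> nc_ideal G"
    using qs by blast
qed

lemma sos_zero: "sos_mod (nc_ideal G) 0"
  unfolding sos_mod_def by (intro exI[of _ "[]"]) (simp only: list.map sum_list.Nil diff_self nc_ideal.zero list.set ball_empty simp_thms)

lemma sos_add: "sos_mod (nc_ideal G) x \<Longrightarrow> sos_mod (nc_ideal G) y \<Longrightarrow> sos_mod (nc_ideal G) (x + y)"
  unfolding sos_mod_def
proof (elim exE conjE)
  fix qs rs assume qs: "\<forall>q\<in>set qs. fsupp q" and x: "x - sum_list (map (\<lambda>q. nc_mult (nc_star q) q) qs) \<in> nc_ideal G"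
    and rs: "\<forall>q\<in>set rs. fsupp q" and y: "y - sum_list (map (\<lambda>q. nc_mult (nc_star q) q) rs) \<in> nc_ideal G"
  have "x + y - sum_list (map (\<lambda>q. nc_mult (nc_star q) q) (qs @ rs)) =
     (x - sum_list (map (\<lambda>q. nc_mult (nc_star q) q) qs)) + (y - sum_list (map (\<lambda>q. nc_mult (nc_star q) q) rs))"
    by (simp only: sum_list_map_append add_diff_add)
  also have "\<dots> \<in> nc_ideal G" by (rule nc_ideal.add[OF x y])
  finally show "\<exists>qs. (\<forall>q\<in>set qs. fsupp q) \<and> x + y - sum_list (map (\<lambda>q. nc_mult (nc_star q) q) qs) \<in> nc_ideal G"
    using qs rs by (intro exI[of _ "qs @ rs"]) auto
qed

lemma sos_sq: "fsupp q \<Longrightarrow> sos_mod (nc_ideal G) (nc_mult (nc_star q) q)"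
  unfolding sos_mod_def by (intro exI[of _ "[q]"]) (simp only: list.map sum_list.Cons sum_list.Nil add_0_right diff_self nc_ideal.zero list.set ball_simps simp_thms)

lemma sos_one: "sos_mod (nc_ideal G) nc_one"
  using sos_sq[of nc_one G] by simp

lemma sos_scale:
  assumes "sos_mod (nc_ideal G) x" "r \<ge> 0"
  shows "sos_mod (nc_ideal G) (nc_scale (complex_of_real r) x)"
proof -
  obtain qs where qs: "\<forall>q\<in>set qs. fsupp q" and x: "x - sum_list (map (\<lambda>q. nc_mult (nc_star q) q) qs) \<in> nc_ideal G"
    using assms(1) unfolding sos_mod_def by blast
  define c where "c = complex_of_real (sqrt r)"
  have cc: "c * cnj c = complex_of_real r" using assms(2)
    by (simp add: c_def flip: of_real_mult)
  have e: "nc_mult (nc_star (nc_scale c q)) (nc_scale c q) = nc_scale (complex_of_real r) (nc_mult (nc_star q) q)" for q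
    by (simp only: nc_star_scale nc_mult_scale_left nc_mult_scale_right nc_scale_scale cc)
  have "nc_scale (complex_of_real r) x - sum_list (map (\<lambda>q. nc_mult (nc_star q) q) (map (nc_scale c) qs))
     = nc_scale (complex_of_real r) (x - sum_list (map (\<lambda>q. nc_mult (nc_star q) q) qs))"
    by (simp only: nc_scale_diff nc_scale_sum_list map_map comp_def e)
  also have "\<dots> \<in> nc_ideal G" using x by (rule ideal_scale')
  finally show ?thesis unfolding sos_mod_def using qs by (intro exI[of _ "map (nc_scale c) qs"]) auto
qed

lemma sos_conj:
  assumes "sos_mod (nc_ideal G) x" "fsupp y"
  shows "sos_mod (nc_ideal G) (nc_mult (nc_star y) (nc_mult x y))"
proof -
  obtain qs where qs: "\<forall>q\<in>set qs. fsupp q" and x: "x - sum_list (map (\<lambda>q. nc_mult (nc_star q) q) qs) \<in> nc_ideal G"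
    using assms(1) unfolding sos_mod_def by blast
  have e: "nc_mult (nc_star (nc_mult q y)) (nc_mult q y) = nc_mult (nc_star y) (nc_mult (nc_mult (nc_star q) q) y)" for q
    by (simp only: nc_star_mult nc_mult_assoc)
  have "nc_mult (nc_star y) (nc_mult x y) - sum_list (map (\<lambda>q. nc_mult (nc_star q) q) (map (\<lambda>q. nc_mult q y) qs))
     = nc_mult (nc_star y) (nc_mult (x - sum_list (map (\<lambda>q. nc_mult (nc_star q) q) qs)) y)"
    by (simp only: nc_mult_diff_left nc_mult_diff_right nc_mult_sum_list_left nc_mult_sum_list_right
       map_map comp_def e)
  also have "\<dots> \<in> nc_ideal G" using x assms(2) by (intro nc_ideal.lmult nc_ideal.rmult) simp_all
  finally show ?thesis unfolding sos_mod_def using qs assms(2)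
    by (intro exI[of _ "map (\<lambda>q. nc_mult q y) qs"]) auto
qed




lemma star_lin: "nc_star (nc_lin a) = nc_lin a"
  unfolding nc_lin_def by (simp only: nc_star_sum nc_star_scale complex_cnj_complex_of_real nc_star_var)

lemma key_arith: "(c::real) \<noteq> 0 \<Longrightarrow> complex_of_real (-1/c) * u - v = complex_of_real (-1/c) * (complex_of_real c * v + u)"
  by (simp add: field_simps)

lemma part1:
  assumes "mpoly_eval h a \<noteq> 0"
  shows "invertible_mod (Jideal h e) (nc_lin a)"
proof -
  define X where "X = nc_lin a"
  define p where "p = hline h a e"
  obtain c p' where pc: "p = pCons c p'" by (cases p)
  have "c = poly p 0" by (simp add: pc)
  also have "\<dots> = mpoly_eval h a" by (simp add: p_def poly_hline)
  finally have c: "c \<noteq> 0" using assms by simp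
  define P where "P = nc_polyeval p' X"
  have gen: "nc_polyeval p X \<in> Jideal h e"
    unfolding Jideal_def p_def X_def by (rule nc_ideal.gen) blast
  have pX: "nc_polyeval p X = nc_scale (complex_of_real c) nc_one + nc_mult X P"
    by (simp only: pc polyeval_pCons P_def)
  define y where "y = nc_scale (complex_of_real (-1/c)) P"
  have fy: "fsupp y" by (simp add: y_def P_def X_def)
  have yX: "nc_mult y X = nc_scale (complex_of_real (-1/c)) (nc_mult X P)"
    by (simp only: y_def nc_mult_scale_left P_def polyeval_commute)
  have Xy: "nc_mult X y = nc_scale (complex_of_real (-1/c)) (nc_mult X P)"
    by (simp only: y_def nc_mult_scale_right)
  have key: "nc_scale (complex_of_real (-1/c)) (nc_mult X P) - nc_one
      = nc_scale (complex_of_real (-1/c)) (nc_polyeval p X)"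
  proof (rule ext)
    fix w
    show "(nc_scale (complex_of_real (-1/c)) (nc_mult X P) - nc_one) w
      = nc_scale (complex_of_real (-1/c)) (nc_polyeval p X) w"
      unfolding pX nc_scale_def plus_fun_apply minus_apply by (rule key_arith[OF c])
  qed
  have "nc_scale (complex_of_real (-1/c)) (nc_polyeval p X) \<in> Jideal h e"
    using gen unfolding Jideal_def by (rule ideal_scale')
  then show ?thesis unfolding invertible_mod_def X_def[symmetric]
    using fy yX Xy key by metis
qed

lemma part2:
  assumes "a \<in> hcone_interior h e"
  shows "sos_mod (Jideal h e) (nc_lin a)"
proof -
  define X where "X = nc_lin a"
  define p where "p = hline h a e"
  have roots: "\<forall>z. poly (map_poly complex_of_real p) z = 0 \<longrightarrow> z \<in> \<real> \<and> 0 < Re z"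
    using assms by (simp add: hcone_interior_def p_def)
  have "p \<noteq> 0"
  proof
    assume "p = 0"
    then show False using roots[rule_format, of 0] by simp
  qed
  then obtain s r where sr: "[:0,1:] - s * s = p * r" using sqrt_mod roots by blast
  define S where "S = nc_polyeval s X"
  have starS: "nc_star S = S" unfolding S_def by (rule polyeval_star) (simp only: X_def star_lin)
  have "X - nc_mult S S = nc_mult (nc_polyeval p X) (nc_polyeval r X)"
    using arg_cong[OF sr, of "\<lambda>q. nc_polyeval q X"]
    by (simp only: polyeval_diff polyeval_mult polyeval_X S_def)
  also have "\<dots> \<in> Jideal h e"
    unfolding Jideal_def
    by (rule nc_ideal.rmult) (unfold X_def, rule fsupp_polyeval, rule fsupp_lin, rule nc_ideal.gen, unfold p_def X_def, blast)
  finally have d: "X - nc_mult (nc_star S) S \<in> Jideal h e" by (simp only: starS)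
  have fS: "fsupp S" unfolding S_def X_def by (intro fsupp_polyeval fsupp_lin)
  have "sos_mod (Jideal h e) (nc_mult (nc_star S) S)"
    unfolding Jideal_def by (rule sos_sq[OF fS])
  from sos_cong[OF this[unfolded Jideal_def] d[unfolded Jideal_def]]
  show ?thesis unfolding X_def Jideal_def .
qed




abbreviation cst :: "real \<Rightarrow> 'n ncpoly" where
  "cst N \<equiv> nc_scale (complex_of_real N) nc_one"

definition Bnd :: "'n ncpoly set \<Rightarrow> 'n ncpoly \<Rightarrow> bool" where
  "Bnd I x \<longleftrightarrow> fsupp x \<and> (\<exists>N\<ge>0. sos_mod I (cst N - nc_mult (nc_star x) x))"

definition Hb :: "'n ncpoly set \<Rightarrow> 'n ncpoly \<Rightarrow> bool" where
  "Hb I y \<longleftrightarrow> fsupp y \<and> (\<exists>N. sos_mod I (cst N + y) \<and> sos_mod I (cst N - y))"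

lemma sos_eq: "sos_mod I x \<Longrightarrow> x' = x \<Longrightarrow> sos_mod I x'"
  by simp

lemma sos_cst: "N \<ge> 0 \<Longrightarrow> sos_mod (nc_ideal G) (cst N)"
  by (rule sos_scale[OF sos_one])

lemma Bnd_one: "Bnd (nc_ideal G) nc_one"
  unfolding Bnd_def
proof (intro conjI exI[of _ 1])
  show "sos_mod (nc_ideal G) (cst 1 - nc_mult (nc_star nc_one) nc_one)"
    by (rule sos_eq[OF sos_zero]) (simp only: nc_star_one nc_mult_one_left of_real_1 nc_scale_one diff_self)
qed simp_all

lemma Bnd_mult:
  assumes "Bnd (nc_ideal G) x" "Bnd (nc_ideal G) y"
  shows "Bnd (nc_ideal G) (nc_mult x y)"
proof -
  obtain N where N: "N \<ge> 0" "sos_mod (nc_ideal G) (cst N - nc_mult (nc_star x) x)" and fx: "fsupp x"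
    using assms(1) unfolding Bnd_def by blast
  obtain M where M: "M \<ge> 0" "sos_mod (nc_ideal G) (cst M - nc_mult (nc_star y) y)" and fy: "fsupp y"
    using assms(2) unfolding Bnd_def by blast
  have "sos_mod (nc_ideal G) (nc_mult (nc_star y) (nc_mult (cst N - nc_mult (nc_star x) x) y)
     + nc_scale (complex_of_real N) (cst M - nc_mult (nc_star y) y))"
    by (intro sos_add sos_conj sos_scale N M fy)
  moreover have "nc_mult (nc_star y) (nc_mult (cst N - nc_mult (nc_star x) x) y)
     + nc_scale (complex_of_real N) (cst M - nc_mult (nc_star y) y)
     = cst (N * M) - nc_mult (nc_star (nc_mult x y)) (nc_mult x y)"
    apply (simp only: nc_star_mult nc_mult_diff_left nc_mult_diff_right nc_mult_scale_left
        nc_mult_scale_right nc_mult_one_left nc_scale_diff nc_scale_scale nc_mult_assoc of_real_mult)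
    apply (rule ext)
    apply (simp only: plus_fun_apply minus_apply nc_scale_def)
    apply (simp add: algebra_simps)
    done
  ultimately show ?thesis unfolding Bnd_def using N M fx fy
    by (intro conjI exI[of _ "N * M"]) (simp_all add: sos_eq)
qed

lemma Bnd_scale:
  assumes "Bnd (nc_ideal G) x"
  shows "Bnd (nc_ideal G) (nc_scale c x)"
proof -
  obtain N where N: "N \<ge> 0" "sos_mod (nc_ideal G) (cst N - nc_mult (nc_star x) x)" and fx: "fsupp x"
    using assms(1) unfolding Bnd_def by blast
  define r where "r = (cmod c)^2"
  have r: "r \<ge> 0" by (simp add: r_def)
  have cc: "c * cnj c = complex_of_real r" unfolding r_def by (metis complex_norm_square)
  have "sos_mod (nc_ideal G) (nc_scale (complex_of_real r) (cst N - nc_mult (nc_star x) x))"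
    by (rule sos_scale[OF N(2) r])
  moreover have "nc_scale (complex_of_real r) (cst N - nc_mult (nc_star x) x) =
     cst (r * N) - nc_mult (nc_star (nc_scale c x)) (nc_scale c x)"
    by (simp only: nc_star_scale nc_mult_scale_left nc_mult_scale_right nc_scale_scale cc
       nc_scale_diff of_real_mult)
  ultimately show ?thesis unfolding Bnd_def using N r fx
    by (intro conjI exI[of _ "r * N"]) (simp_all add: sos_eq)
qed

lemma Hb_of_Bnd:
  assumes "Bnd (nc_ideal G) x"
  shows "Hb (nc_ideal G) (x + nc_star x)"
proof -
  obtain N where N: "N \<ge> 0" "sos_mod (nc_ideal G) (cst N - nc_mult (nc_star x) x)" and fx: "fsupp x"
    using assms(1) unfolding Bnd_def by blast
  have "sos_mod (nc_ideal G) (nc_mult (nc_star (nc_one + x)) (nc_one + x) + (cst N - nc_mult (nc_star x) x))"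
    using fx by (intro sos_add sos_sq N) simp
  moreover have "nc_mult (nc_star (nc_one + x)) (nc_one + x) + (cst N - nc_mult (nc_star x) x)
      = cst (N + 1) + (x + nc_star x)"
    apply (simp only: nc_star_add nc_star_one nc_mult_add_left nc_mult_add_right nc_mult_one_left
       nc_mult_one_right)
    apply (rule ext)
    apply (simp only: plus_fun_apply minus_apply nc_scale_def of_real_add)
    apply (simp add: algebra_simps)
    done
  moreover have "sos_mod (nc_ideal G) (nc_mult (nc_star (nc_one - x)) (nc_one - x) + (cst N - nc_mult (nc_star x) x))"
    using fx by (intro sos_add sos_sq N) simp
  moreover have "nc_mult (nc_star (nc_one - x)) (nc_one - x) + (cst N - nc_mult (nc_star x) x)
      = cst (N + 1) - (x + nc_star x)"
    apply (simp only: nc_star_diff nc_star_one nc_mult_diff_left nc_mult_diff_right nc_mult_one_left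
       nc_mult_one_right)
    apply (rule ext)
    apply (simp only: plus_fun_apply minus_apply nc_scale_def of_real_add)
    apply (simp add: algebra_simps)
    done
  ultimately show ?thesis unfolding Hb_def using fx
    by (intro conjI exI[of _ "N + 1"]) (simp_all add: sos_eq)
qed

lemma Hb_zero: "Hb (nc_ideal G) 0"
  unfolding Hb_def
  by (intro conjI exI[of _ 0]) (simp_all only: of_real_0 nc_scale_zero add_0 diff_zero sos_zero fsupp_zero)

lemma Hb_add:
  assumes "Hb (nc_ideal G) x" "Hb (nc_ideal G) y"
  shows "Hb (nc_ideal G) (x + y)"
proof -
  obtain N where N: "sos_mod (nc_ideal G) (cst N + x)" "sos_mod (nc_ideal G) (cst N - x)" and fx: "fsupp x"
    using assms(1) unfolding Hb_def by blast
  obtain M where M: "sos_mod (nc_ideal G) (cst M + y)" "sos_mod (nc_ideal G) (cst M - y)" and fy: "fsupp y"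
    using assms(2) unfolding Hb_def by blast
  have e1: "cst (N + M) + (x + y) = (cst N + x) + (cst M + y)"
    by (rule ext) (simp add: nc_scale_def algebra_simps)
  have e2: "cst (N + M) - (x + y) = (cst N - x) + (cst M - y)"
    by (rule ext) (simp add: nc_scale_def algebra_simps)
  show ?thesis unfolding Hb_def using fx fy
    by (intro conjI exI[of _ "N + M"]) (simp_all only: e1 e2 sos_add N M fsupp_add)
qed

lemma Hb_sum:
  assumes "finite A" "\<And>a. a \<in> A \<Longrightarrow> Hb (nc_ideal G) (f a)"
  shows "Hb (nc_ideal G) (\<Sum>a\<in>A. f a)"
  using assms
proof (induction A rule: finite_induct)
  case empty
  then show ?case by (simp only: sum.empty Hb_zero)
next
  case (insert x F)
  then show ?case by (simp only: sum.insert[OF insert(1,2)]) (intro Hb_add; simp)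
qed

lemma Hb_scale:
  assumes "Hb (nc_ideal G) y" "r \<ge> 0"
  shows "Hb (nc_ideal G) (nc_scale (complex_of_real r) y)"
proof -
  obtain N where N: "sos_mod (nc_ideal G) (cst N + y)" "sos_mod (nc_ideal G) (cst N - y)" and fy: "fsupp y"
    using assms(1) unfolding Hb_def by blast
  have e1: "cst (r * N) + nc_scale (complex_of_real r) y = nc_scale (complex_of_real r) (cst N + y)"
    by (rule ext) (simp add: nc_scale_def algebra_simps)
  have e2: "cst (r * N) - nc_scale (complex_of_real r) y = nc_scale (complex_of_real r) (cst N - y)"
    by (rule ext) (simp add: nc_scale_def algebra_simps)
  show ?thesis unfolding Hb_def using fy
    by (intro conjI exI[of _ "r * N"]) (simp_all only: e1 e2 sos_scale N assms(2) fsupp_scale)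
qed




lemma id1: "nc_mult (nc_one - x) (nc_mult (nc_one + x) (nc_one - x)) + nc_mult (nc_one + x) (nc_mult (nc_one - x) (nc_one + x))
   = nc_scale 2 (nc_one - nc_mult x x)"
  apply (simp only: nc_mult_add_left nc_mult_add_right nc_mult_diff_left nc_mult_diff_right
        nc_mult_one_left nc_mult_one_right)
  apply (rule ext)
  apply (simp only: plus_fun_apply minus_apply nc_scale_def)
  apply (simp add: algebra_simps)
  done

lemma id3: "(\<epsilon>::real) > 0 \<Longrightarrow> nc_scale (complex_of_real (1 / (2 * \<epsilon>^2))) (nc_scale 2 (nc_one - nc_scale (complex_of_real \<epsilon> * complex_of_real \<epsilon>) v))
   = cst (1 / \<epsilon>^2) - v"
  apply (rule ext)
  apply (simp only: plus_fun_apply minus_apply nc_scale_def)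
  apply (simp add: field_simps power2_eq_square)
  done

lemma lin_apply: "nc_lin a w = (\<Sum>j\<in>UNIV. complex_of_real (a j) * nc_var j w)"
  by (simp add: nc_lin_def sum_fun_apply nc_scale_def)

lemma lin_delta: "(\<Sum>j\<in>UNIV. complex_of_real (if j = i then 1 else 0) * nc_var j w) = nc_var (i::'a::finite) w"
proof -
  have "(\<Sum>j\<in>UNIV. complex_of_real (if j = i then 1 else 0) * nc_var j w) = (\<Sum>j\<in>UNIV. if j = i then nc_var j w else 0)"
    by (intro sum.cong refl) simp
  also have "\<dots> = nc_var i w" by (simp add: sum.delta)
  finally show ?thesis .
qed

lemma lin_comb: "nc_lin (\<lambda>j. e j + s * (if j = i then 1 else 0)) = nc_lin e + nc_scale (complex_of_real s) (nc_var (i::'a::finite))"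
proof (rule ext)
  fix w
  have "nc_lin (\<lambda>j. e j + s * (if j = i then 1 else 0)) w = (\<Sum>j\<in>UNIV. complex_of_real (e j) * nc_var j w
      + complex_of_real s * (complex_of_real (if j = i then 1 else 0) * nc_var j w))"
    unfolding lin_apply by (intro sum.cong refl) (simp only: of_real_add of_real_mult distrib_right mult.assoc)
  also have "\<dots> = nc_lin e w + complex_of_real s * nc_var i w"
    by (simp only: sum.distrib sum_distrib_left[symmetric] lin_delta lin_apply)
  finally show "nc_lin (\<lambda>j. e j + s * (if j = i then 1 else 0)) w = (nc_lin e + nc_scale (complex_of_real s) (nc_var i)) w"
    by (simp only: plus_fun_apply nc_scale_def)
qed

lemma grp2: "(a::'a::ab_group_add) + x - (b + x) = a - b"
  by simp

lemma Bnd_var: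
  assumes "homogeneous h" "hyperbolic h e"
  shows "Bnd (Jideal h e) (nc_var i)"
proof -
  define \<delta> where "\<delta> = (\<lambda>j. if j = i then 1 else 0 :: real)"
  obtain \<epsilon> where ep: "\<epsilon> > 0" and cone: "\<And>s. \<bar>s\<bar> \<le> \<epsilon> \<Longrightarrow> (\<lambda>j. e j + s * \<delta> j) \<in> hcone_interior h e"
    using cone_nbhd[OF assms, of \<delta>] by blast
  have lin: "nc_lin (\<lambda>j. e j + s * \<delta> j) = nc_lin e + nc_scale (complex_of_real s) (nc_var i)" for s
    unfolding \<delta>_def by (rule lin_comb)
  have gen: "nc_one - nc_lin e \<in> Jideal h e"
    unfolding Jideal_def by (rule nc_ideal.gen) blast
  have sos_u: "sos_mod (Jideal h e) (nc_one + nc_scale (complex_of_real s) (nc_var i))"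
    if "\<bar>s\<bar> \<le> \<epsilon>" for s
  proof -
    have s1: "sos_mod (Jideal h e) (nc_lin (\<lambda>j. e j + s * \<delta> j))" by (rule part2[OF cone[OF that]])
    have "nc_one + nc_scale (complex_of_real s) (nc_var i) - nc_lin (\<lambda>j. e j + s * \<delta> j)
       = nc_one - nc_lin e"
      unfolding lin by (rule grp2)
    then have d: "nc_one + nc_scale (complex_of_real s) (nc_var i) - nc_lin (\<lambda>j. e j + s * \<delta> j) \<in> Jideal h e"
      using gen by (simp only:)
    show ?thesis using sos_cong[OF s1[unfolded Jideal_def] d[unfolded Jideal_def]] unfolding Jideal_def .
  qed
  define x where "x = nc_scale (complex_of_real \<epsilon>) (nc_var i)"
  define A where "A = nc_one + x"
  define B where "B = nc_one - x"
  have sA: "sos_mod (Jideal h e) A" unfolding A_def x_def using ep by (intro sos_u) simp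
  have "B = nc_one + nc_scale (complex_of_real (- \<epsilon>)) (nc_var i)"
    by (rule ext) (simp add: B_def x_def nc_scale_def)
  then have sB: "sos_mod (Jideal h e) B" using ep by (simp only:) (intro sos_u, simp)
  have stA: "nc_star A = A" by (simp only: A_def x_def nc_star_add nc_star_one nc_star_scale nc_star_var complex_cnj_complex_of_real)
  have stB: "nc_star B = B" by (simp only: B_def x_def nc_star_diff nc_star_one nc_star_scale nc_star_var complex_cnj_complex_of_real)
  have fA: "fsupp A" by (simp add: A_def x_def)
  have fB: "fsupp B" by (simp add: B_def x_def)
  have s1: "sos_mod (Jideal h e) (nc_mult (nc_star B) (nc_mult A B))"
    using sA fB unfolding Jideal_def by (rule sos_conj)
  have s2: "sos_mod (Jideal h e) (nc_mult (nc_star A) (nc_mult B A))"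
    using sB fA unfolding Jideal_def by (rule sos_conj)
  have s3: "sos_mod (Jideal h e) (nc_scale (complex_of_real (1 / (2 * \<epsilon>^2)))
      (nc_mult (nc_star B) (nc_mult A B) + nc_mult (nc_star A) (nc_mult B A)))"
    using s1 s2 unfolding Jideal_def by (intro sos_scale sos_add) simp_all
  have i1: "nc_mult (nc_star B) (nc_mult A B) + nc_mult (nc_star A) (nc_mult B A) = nc_scale 2 (nc_one - nc_mult x x)"
    by (simp only: stA stB) (unfold A_def B_def, rule id1)
  have xx: "nc_mult x x = nc_scale (complex_of_real \<epsilon> * complex_of_real \<epsilon>) (nc_mult (nc_var i) (nc_var i))"
    by (simp only: x_def nc_mult_scale_left nc_mult_scale_right nc_scale_scale)
  have "nc_scale (complex_of_real (1 / (2 * \<epsilon>^2)))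
      (nc_mult (nc_star B) (nc_mult A B) + nc_mult (nc_star A) (nc_mult B A))
     = cst (1 / \<epsilon>^2) - nc_mult (nc_star (nc_var i)) (nc_var i)"
    unfolding i1 xx nc_star_var by (rule id3[OF ep])
  with s3 have "sos_mod (Jideal h e) (cst (1 / \<epsilon>^2) - nc_mult (nc_star (nc_var i)) (nc_var i))"
    by (simp only:)
  then show ?thesis unfolding Bnd_def using ep
    by (intro conjI exI[of _ "1 / \<epsilon>^2"]) simp_all
qed

definition mono :: "'n list \<Rightarrow> 'n ncpoly" where
  "mono w = (\<lambda>u. if u = w then 1 else 0)"

lemma mono_Nil: "mono [] = nc_one"
  by (rule ext) (simp add: mono_def nc_one_def)

lemma mono_Cons: "mono (i # w) = nc_mult (nc_var i) (mono w)"
proof (rule ext)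
  fix u :: "'a list"
  have t: "nc_var i (take k u) * mono w (drop k u) = (if k = 1 \<and> u = i # w then 1 else 0)"
    if "k \<le> length u" for k
  proof (cases "take k u = [i] \<and> drop k u = w")
    case True
    have "length (take k u) = 1" using True by simp
    then have "k = 1" using that by (simp add: min_def split: if_splits)
    moreover have "u = take k u @ drop k u" by (rule append_take_drop_id[symmetric])
    then have "u = i # w" using True by simp
    ultimately show ?thesis using True by (simp add: nc_var_def mono_def)
  next
    case False
    then have "\<not> (k = 1 \<and> u = i # w)" by auto
    then show ?thesis using False by (auto simp: nc_var_def mono_def)
  qed
  have "nc_mult (nc_var i) (mono w) u = (\<Sum>k\<le>length u. if k = 1 \<and> u = i # w then 1 else 0)"
    unfolding nc_mult_def by (intro sum.cong refl) (simp add: t)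
  also have "\<dots> = mono (i # w) u"
    by (cases "u = i # w") (auto simp: mono_def Suc_le_eq)
  finally show "mono (i # w) u = nc_mult (nc_var i) (mono w) u" ..
qed

lemma Bnd_mono:
  assumes "homogeneous h" "hyperbolic h e"
  shows "Bnd (Jideal h e) (mono w)"
proof (induction w)
  case Nil
  then show ?case unfolding mono_Nil Jideal_def by (rule Bnd_one)
next
  case (Cons i w)
  then show ?case unfolding mono_Cons Jideal_def
    by (intro Bnd_mult Bnd_var[OF assms, unfolded Jideal_def])
qed

lemma fsupp_decomp:
  assumes "fsupp b"
  shows "b = (\<Sum>w\<in>{w. b w \<noteq> 0}. nc_scale (b w) (mono w))"
proof (rule ext)
  fix u
  have "(\<Sum>w\<in>{w. b w \<noteq> 0}. nc_scale (b w) (mono w)) u = (\<Sum>w\<in>{w. b w \<noteq> 0}. if u = w then b w else 0)"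
    by (simp add: sum_fun_apply nc_scale_def mono_def if_distrib cong: if_cong)
  also have "\<dots> = b u" using assms unfolding fsupp_def by (simp add: sum.delta)
  finally show "b u = (\<Sum>w\<in>{w. b w \<noteq> 0}. nc_scale (b w) (mono w)) u" ..
qed

lemma Hb_herm:
  assumes "homogeneous h" "hyperbolic h e" "fsupp b"
  shows "Hb (Jideal h e) (b + nc_star b)"
proof -
  define S where "S = {w. b w \<noteq> 0}"
  have fin: "finite S" using assms(3) by (simp add: S_def fsupp_def)
  have dec: "b = (\<Sum>w\<in>S. nc_scale (b w) (mono w))" unfolding S_def by (rule fsupp_decomp[OF assms(3)])
  have "b + nc_star b = (\<Sum>w\<in>S. nc_scale (b w) (mono w)) + nc_star (\<Sum>w\<in>S. nc_scale (b w) (mono w))"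
    by (simp only: dec[symmetric])
  also have "\<dots> = (\<Sum>w\<in>S. nc_scale (b w) (mono w) + nc_star (nc_scale (b w) (mono w)))"
    by (simp only: nc_star_sum sum.distrib)
  finally have eq: "b + nc_star b = (\<Sum>w\<in>S. nc_scale (b w) (mono w) + nc_star (nc_scale (b w) (mono w)))" .
  show ?thesis unfolding eq Jideal_def
    by (intro Hb_sum fin Hb_of_Bnd Bnd_scale Bnd_mono[OF assms(1,2), unfolded Jideal_def])
qed

lemma part3:
  assumes "homogeneous h" "hyperbolic h e" "fsupp b" "hermitian_mod (Jideal h e) b"
  shows "\<exists>\<epsilon>>0. \<forall>t::real. \<bar>t\<bar> \<le> \<epsilon> \<longrightarrow>
               sos_mod (Jideal h e) (nc_one + nc_scale (complex_of_real t) b)"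
proof -
  define GG where "GG = {nc_polyeval (hline h a e) (nc_lin a) | a. True} \<union> {nc_one - nc_lin e}"
  have J: "Jideal h e = nc_ideal GG" by (simp add: Jideal_def GG_def)
  define y where "y = nc_scale (complex_of_real (1/2)) (b + nc_star b)"
  have "Hb (nc_ideal GG) y" unfolding y_def
    by (rule Hb_scale[OF Hb_herm[OF assms(1-3), unfolded J]]) simp
  then obtain N where N: "sos_mod (nc_ideal GG) (cst N + y)" "sos_mod (nc_ideal GG) (cst N - y)"
    unfolding Hb_def by blast
  define N' where "N' = max N 1"
  have N'1: "N' \<ge> 1" by (simp add: N'_def)
  have P: "sos_mod (nc_ideal GG) (cst N' + y)"
  proof -
    have "sos_mod (nc_ideal GG) (cst (N' - N) + (cst N + y))"
      by (intro sos_add sos_cst N) (simp add: N'_def)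
    moreover have "cst N' + y = cst (N' - N) + (cst N + y)"
      by (rule ext) (simp add: nc_scale_def algebra_simps)
    ultimately show ?thesis by (rule sos_eq)
  qed
  have M: "sos_mod (nc_ideal GG) (cst N' - y)"
  proof -
    have "sos_mod (nc_ideal GG) (cst (N' - N) + (cst N - y))"
      by (intro sos_add sos_cst N) (simp add: N'_def)
    moreover have "cst N' - y = cst (N' - N) + (cst N - y)"
      by (rule ext) (simp add: nc_scale_def algebra_simps)
    ultimately show ?thesis by (rule sos_eq)
  qed
  have herm: "nc_star b - b \<in> nc_ideal GG" using assms(4) by (simp add: hermitian_mod_def J)
  have "sos_mod (nc_ideal GG) (nc_one + nc_scale (complex_of_real t) b)" if t: "\<bar>t\<bar> \<le> 1 / N'" for t
  proof -
    define T' where "T' = nc_one + nc_scale (complex_of_real t) y"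
    have d: "nc_one + nc_scale (complex_of_real t) b - T' = nc_scale (complex_of_real (- t / 2)) (nc_star b - b)"
      by (rule ext) (simp add: T'_def y_def nc_scale_def field_simps)
    have dJ: "nc_one + nc_scale (complex_of_real t) b - T' \<in> nc_ideal GG"
      unfolding d by (rule ideal_scale'[OF herm])
    have tN: "\<bar>t\<bar> * N' \<le> 1" using t N'1 by (simp add: field_simps)
    have "sos_mod (nc_ideal GG) T'"
    proof (cases "t \<ge> 0")
      case True
      have "sos_mod (nc_ideal GG) (cst (1 - t * N') + nc_scale (complex_of_real t) (cst N' + y))"
        using True tN by (intro sos_add sos_cst sos_scale P) simp_all
      moreover have "T' = cst (1 - t * N') + nc_scale (complex_of_real t) (cst N' + y)"
        by (rule ext) (simp add: T'_def nc_scale_def algebra_simps)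
      ultimately show ?thesis by (rule sos_eq)
    next
      case False
      have "sos_mod (nc_ideal GG) (cst (1 + t * N') + nc_scale (complex_of_real (- t)) (cst N' - y))"
        using False tN by (intro sos_add sos_cst sos_scale M) simp_all
      moreover have "T' = cst (1 + t * N') + nc_scale (complex_of_real (- t)) (cst N' - y)"
        by (rule ext) (simp add: T'_def nc_scale_def algebra_simps)
      ultimately show ?thesis by (rule sos_eq)
    qed
    then show ?thesis using dJ by (rule sos_cong)
  qed
  moreover have "1 / N' > 0" using N'1 by simp
  ultimately show ?thesis unfolding J by blast
qed

theorem lemma2p2:
  fixes h :: "('n::finite) mpoly" and e :: "'n \<Rightarrow> real"
  assumes "homogeneous h" and "hyperbolic h e"
  shows "(\<forall>a. mpoly_eval h a \<noteq> 0 \<longrightarrow> invertible_mod (Jideal h e) (nc_lin a))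
       \<and> (\<forall>a\<in>hcone_interior h e. sos_mod (Jideal h e) (nc_lin a))
       \<and> (\<forall>b. fsupp b \<and> hermitian_mod (Jideal h e) b \<longrightarrow>
            (\<exists>\<epsilon>>0. \<forall>t::real. \<bar>t\<bar> \<le> \<epsilon> \<longrightarrow>
               sos_mod (Jideal h e) (nc_one + nc_scale (complex_of_real t) b)))"
  using part1 part2 part3[OF assms] by blast


end
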